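(* In the setting described in the context, let $p$ be a facet of $\Delta_\lambda$ of $\mathbf a$-degree at least $1$. Then the simplicial complex $F_{<p}\cap p$ has dimension $\dim\Delta_\lambda-1=|\lambda|-3$.
   Context: Let $n,d\ge2$, $V(n,d)=\{\mathbf b\in\mathbb N^n:\sum_i b_i=d\}$, and let $\mathbf a\in V(n,d)$ satisfy $a_1\le a_2\le\dots\le a_n$ and $\mathbf a\notin\{(0,\dots,0,d),(0,\dots,0,1,d-1),(0,\dots,0,2,d-2)\}$. Let $\Gamma=V(n,d)\setminus\{\mathbf a\}$ and assume $\Gamma+\Gamma=V(n,2d)$. Order $V(n,d)$ lexicographically ($b<c$ iff the first nonzero coordinate of $c-b$ is positive). Let $\lambda$ be in the semigroup generated by $\Gamma$, and $|\lambda|=(\sum_i\lambda_i)/d=:k$. A closed chain from $0$ to $\lambda$ with links in $V(n,d)$ is a sequence $0=v_0,v_1,\dots,v_k=\lambda$ in $\mathbb N^n$ with $v_j-v_{j-1}\in V(n,d)$ for all $j$; its links are $v_j-v_{j-1}$ and its $\mathbf a$-degree is the number of links equal to $\mathbf a$; its open chain is the set $\{v_1,\dots,v_{k-1}\}$. $\Delta_\lambda$ is the simplicial complex on $\mathbb N^n$ whose facets are the open chains of all such closed chains (it is pure of dimension $|\lambda|-2$); $\Gamma_\lambda$ is the subcomplex generated by the open chains of closed chains all of whose links lie in $\Gamma$. Facets are ordered: $q<p$ iff the $\mathbf a$-degree of $q$ is smaller than that of $p$, or they are equal and the sequence of links of $q$ is lexicographically smaller than that of $p$ (comparing first links first, using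 the order on $V(n,d)$). For a facet $p$, $F_{<p}$ is the subcomplex of $\Delta_\lambda$ generated by all facets $q<p$, and $p$ also denotes the full simplex on its vertex set. *)

theory Defs
  imports Main
begin

definition Vnd :: "nat \<Rightarrow> nat \<Rightarrow> nat list set" where
  "Vnd n d = {b. length b = n \<and> sum_list b = d}"

definition vadd :: "nat list \<Rightarrow> nat list \<Rightarrow> nat list" where
  "vadd xs ys = map (\<lambda>(x, y). x + y) (zip xs ys)"

definition vzero :: "nat \<Rightarrow> nat list" where
  "vzero n = replicate n 0"

definition vsum :: "nat \<Rightarrow> nat list list \<Rightarrow> nat list" where
  "vsum n ls = foldr vadd ls (vzero n)"

definition vlex :: "nat list \<Rightarrow> nat list \<Rightarrow> bool" where
  "vlex b c \<longleftrightarrow> (b, c) \<in> lexord {(x, y). x < y}"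

text \<open>A closed chain from 0 to lam is given by its sequence of links l_1..l_k in V(n,d);
  its vertices are v_j = l_1 + ... + l_j.\<close>
definition is_chain :: "nat \<Rightarrow> nat \<Rightarrow> nat list \<Rightarrow> nat list list \<Rightarrow> bool" where
  "is_chain n d lam ls \<longleftrightarrow> set ls \<subseteq> Vnd n d \<and> vsum n ls = lam"

fun psums :: "nat list list \<Rightarrow> nat list list" where
  "psums [] = []"
| "psums (l # ls) = l # map (vadd l) (psums ls)"

definition open_chain :: "nat list list \<Rightarrow> nat list set" where
  "open_chain ls = set (butlast (psums ls))"

definition adeg :: "nat list \<Rightarrow> nat list list \<Rightarrow> nat" where
  "adeg a ls = count_list ls a"

definition facet_less :: "nat list \<Rightarrow> nat list list \<Rightarrow> nat list list \<Rightarrow> bool" where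
  "facet_less a qs ps \<longleftrightarrow> adeg a qs < adeg a ps \<or>
     (adeg a qs = adeg a ps \<and> (qs, ps) \<in> lexord {(b, c). vlex b c})"

definition Delta :: "nat \<Rightarrow> nat \<Rightarrow> nat list \<Rightarrow> nat list set set" where
  "Delta n d lam = {\<sigma>. \<exists>ms. is_chain n d lam ms \<and> \<sigma> \<subseteq> open_chain ms}"

definition F_lt_cap :: "nat \<Rightarrow> nat \<Rightarrow> nat list \<Rightarrow> nat list \<Rightarrow> nat list list \<Rightarrow> nat list set set" where
  "F_lt_cap n d a lam ps = {\<sigma>. \<sigma> \<subseteq> open_chain ps \<and>
      (\<exists>qs. is_chain n d lam qs \<and> facet_less a qs ps \<and> \<sigma> \<subseteq> open_chain qs)}"

definition cdim :: "'v set set \<Rightarrow> int" where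
  "cdim K = Max ((\<lambda>\<sigma>. int (card \<sigma>) - 1) ` K)"

end

theory Submission
  imports Defs
begin

lemma length_vadd[simp]: "length (vadd x y) = min (length x) (length y)"
  by (simp add: vadd_def)

lemma nth_vadd: "i < length x \<Longrightarrow> i < length y \<Longrightarrow> vadd x y ! i = x!i + y!i"
  by (simp add: vadd_def)

lemma vadd_comm: "vadd x y = vadd y x"
  by (rule nth_equalityI) (auto simp: nth_vadd)

lemma vadd_assoc: "vadd (vadd x y) z = vadd x (vadd y z)"
  by (rule nth_equalityI) (auto simp: nth_vadd)

lemma vadd_zero: "length x = n \<Longrightarrow> vadd x (vzero n) = x"
  by (rule nth_equalityI) (auto simp: nth_vadd vzero_def)

lemma sum_vadd: "length x = length y \<Longrightarrow> sum_list (vadd x y) = sum_list x + sum_list y"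
proof (induction x arbitrary: y)
  case Nil then show ?case by (simp add: vadd_def)
next
  case (Cons a x)
  then obtain b y' where "y = b # y'" by (cases y) auto
  with Cons show ?case by (simp add: vadd_def)
qed

lemma vsum_Nil[simp]: "vsum n [] = vzero n" by (simp add: vsum_def)
lemma vsum_Cons[simp]: "vsum n (l # ls) = vadd l (vsum n ls)" by (simp add: vsum_def)
lemma vsum_append: "vsum n (xs @ ys) = foldr vadd xs (vsum n ys)" by (simp add: vsum_def)

lemma length_vsum: "\<forall>l\<in>set ls. length l = n \<Longrightarrow> length (vsum n ls) = n"
  by (induction ls) (auto simp: vzero_def)

lemma sum_vsum: "set ls \<subseteq> Vnd n d \<Longrightarrow> sum_list (vsum n ls) = d * length ls"
proof (induction ls)
  case Nil then show ?case by (simp add: vzero_def)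
next
  case (Cons l ls)
  have "\<forall>x\<in>set ls. length x = n" using Cons.prems by (auto simp: Vnd_def)
  then have "length (vsum n ls) = n" by (rule length_vsum)
  moreover have "length l = n" "sum_list l = d" using Cons.prems by (auto simp: Vnd_def)
  ultimately show ?case using Cons by (simp add: sum_vadd)
qed

lemma vsum_snoc: "\<forall>x\<in>set xs. length x = n \<Longrightarrow> length l = n \<Longrightarrow> vsum n (xs @ [l]) = vadd l (vsum n xs)"
proof (induction xs)
  case Nil then show ?case by (simp add: vadd_zero)
next
  case (Cons y xs)
  then show ?case by (simp add: vadd_assoc[symmetric]) (metis vadd_comm)
qed

lemma length_psums[simp]: "length (psums ls) = length ls"
  by (induction ls) auto

lemma psums_nth: "\<forall>l\<in>set ls. length l = n \<Longrightarrow> j < length ls \<Longrightarrow> psums ls ! j = vsum n (take (Suc j) ls)"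
proof (induction ls arbitrary: j)
  case Nil then show ?case by simp
next
  case (Cons l ls)
  show ?case
  proof (cases j)
    case 0 then show ?thesis using Cons.prems by (simp add: vadd_zero)
  next
    case (Suc m) then show ?thesis using Cons by simp
  qed
qed

lemma open_chain_eq: "\<forall>l\<in>set ls. length l = n \<Longrightarrow>
   open_chain ls = (\<lambda>j. vsum n (take j ls)) ` {1..<length ls}"
proof -
  assume L: "\<forall>l\<in>set ls. length l = n"
  have "open_chain ls = {butlast (psums ls) ! i | i. i < length ls - 1}"
    unfolding open_chain_def by (simp add: set_conv_nth)
  also have "\<dots> = {vsum n (take (Suc i) ls) | i. i < length ls - 1}"
  proof (intro Collect_cong iffI)
    fix x assume "\<exists>i. x = butlast (psums ls) ! i \<and> i < length ls - 1"
    then obtain i where "x = butlast (psums ls) ! i" "i < length ls - 1" by blast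
    then show "\<exists>i. x = vsum n (take (Suc i) ls) \<and> i < length ls - 1"
      using L by (intro exI[of _ i]) (simp add: nth_butlast psums_nth[OF L] less_diff_conv)
  next
    fix x assume "\<exists>i. x = vsum n (take (Suc i) ls) \<and> i < length ls - 1"
    then obtain i where "x = vsum n (take (Suc i) ls)" "i < length ls - 1" by blast
    then show "\<exists>i. x = butlast (psums ls) ! i \<and> i < length ls - 1"
      using L by (intro exI[of _ i]) (simp add: nth_butlast psums_nth[OF L] less_diff_conv)
  qed
  also have "\<dots> = (\<lambda>j. vsum n (take j ls)) ` {1..<length ls}"
  proof (rule set_eqI, rule iffI)
    fix x assume "x \<in> {vsum n (take (Suc i) ls) | i. i < length ls - 1}"
    then obtain i where "x = vsum n (take (Suc i) ls)" "i < length ls - 1" by blast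
    then show "x \<in> (\<lambda>j. vsum n (take j ls)) ` {1..<length ls}"
      by (intro image_eqI[of _ _ "Suc i"]) auto
  next
    fix x assume "x \<in> (\<lambda>j. vsum n (take j ls)) ` {1..<length ls}"
    then obtain j where "x = vsum n (take j ls)" "1 \<le> j" "j < length ls" by auto
    then show "x \<in> {vsum n (take (Suc i) ls) | i. i < length ls - 1}"
      by (intro CollectI exI[of _ "j - 1"]) auto
  qed
  finally show ?thesis .
qed

lemma card_oc_le: "card (open_chain ms) \<le> length ms - 1"
  unfolding open_chain_def using card_length[of "butlast (psums ms)"] by simp

lemma vadd_cancel: "length a = length s \<Longrightarrow> length b = length s \<Longrightarrow> vadd a s = vadd b s \<Longrightarrow> a = b"
proof (rule nth_equalityI)
  assume "length a = length s" "length b = length s" "vadd a s = vadd b s"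
  then show "length a = length b" by simp
  fix i assume "i < length a"
  with \<open>length a = length s\<close> \<open>length b = length s\<close> \<open>vadd a s = vadd b s\<close>
  show "a ! i = b ! i" by (metis add_right_cancel nth_vadd)
qed


lemma chain_len:
  assumes "is_chain n d lam ms" "d > 0"
  shows "length ms = sum_list lam div d"
proof -
  have "sum_list lam = d * length ms"
    using assms sum_vsum[of ms n d] by (auto simp: is_chain_def)
  then show ?thesis using assms(2) by simp
qed

lemma chain_L: "is_chain n d lam ms \<Longrightarrow> \<forall>l\<in>set ms. length l = n"
  by (auto simp: is_chain_def Vnd_def)

lemma vsum_take_sum:
  assumes "is_chain n d lam ms"
  shows "sum_list (vsum n (take j ms)) = d * min j (length ms)"
proof -
  have "set (take j ms) \<subseteq> Vnd n d" using assms set_take_subset[of j ms] by (auto simp: is_chain_def)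
  then show ?thesis using sum_vsum by (simp add: min.commute)
qed

lemma card_oc:
  assumes "is_chain n d lam ms" "d > 0"
  shows "card (open_chain ms) = length ms - 1"
proof -
  have "inj_on (\<lambda>j. vsum n (take j ms)) {1..<length ms}"
  proof (rule inj_onI)
    fix i j assume "i \<in> {1..<length ms}" "j \<in> {1..<length ms}"
      "vsum n (take i ms) = vsum n (take j ms)"
    then have "d * min i (length ms) = d * min j (length ms)"
      using vsum_take_sum[OF assms(1)] by metis
    then show "i = j" using \<open>i \<in> _\<close> \<open>j \<in> _\<close> assms(2) by auto
  qed
  then show ?thesis using open_chain_eq[OF chain_L[OF assms(1)]] card_image by fastforce
qed

lemma chain_inj:
  assumes P: "is_chain n d lam ps" and Q: "is_chain n d lam qs" and "d > 0"
    and E: "open_chain ps = open_chain qs"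
  shows "ps = qs"
proof -
  have len: "length qs = length ps" using chain_len[OF P \<open>d>0\<close>] chain_len[OF Q \<open>d>0\<close>] by simp
  have LP: "\<forall>l\<in>set ps. length l = n" and LQ: "\<forall>l\<in>set qs. length l = n"
    using chain_L P Q by auto
  have V: "vsum n (take j ps) = vsum n (take j qs)" if "j \<le> length ps" for j
  proof -
    consider "j = 0" | "j = length ps" | "1 \<le> j" "j < length ps" using \<open>j \<le> length ps\<close> by linarith
    then show ?thesis
    proof cases
      case 1 then show ?thesis by simp
    next
      case 2 then show ?thesis using P Q len by (simp add: is_chain_def)
    next
      case 3
      then have "vsum n (take j ps) \<in> open_chain qs"
        using E open_chain_eq[OF LP] by auto
      then obtain j' where j': "j' \<in> {1..<length qs}" "vsum n (take j ps) = vsum n (take j' qs)"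
        using open_chain_eq[OF LQ] by auto
      then have "d * min j (length ps) = d * min j' (length qs)"
        using vsum_take_sum[OF P, of j] vsum_take_sum[OF Q, of j'] by metis
      then have "j = j'" using 3 j'(1) len \<open>d>0\<close> by auto
      then show ?thesis using j' by simp
    qed
  qed
  show ?thesis
  proof (rule nth_equalityI)
    show "length ps = length qs" using len by simp
    fix i assume i: "i < length ps"
    have tp: "take (Suc i) ps = take i ps @ [ps ! i]" using i by (simp add: take_Suc_conv_app_nth)
    have tq: "take (Suc i) qs = take i qs @ [qs ! i]" using i len by (simp add: take_Suc_conv_app_nth)
    have lp: "length (ps ! i) = n" using LP i by auto
    have lq: "length (qs ! i) = n" using LQ i len by auto
    have Lt1: "\<forall>x\<in>set (take i ps). length x = n" using LP by (meson in_set_takeD)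
    have Lt2: "\<forall>x\<in>set (take i qs). length x = n" using LQ by (meson in_set_takeD)
    have "vadd (ps ! i) (vsum n (take i ps)) = vadd (qs ! i) (vsum n (take i qs))"
      using V[of "Suc i"] i tp tq vsum_snoc[OF Lt1 lp] vsum_snoc[OF Lt2 lq] by simp
    moreover have "vsum n (take i ps) = vsum n (take i qs)" using V i by simp
    moreover have "length (vsum n (take i ps)) = n" using length_vsum[OF Lt1] .
    ultimately show "ps ! i = qs ! i" using vadd_cancel lp lq by metis
  qed
qed


lemma foldr_vadd_cong: "vadd x (vadd y z) = vadd u (vadd w z) \<Longrightarrow> foldr vadd xs (vadd x (vadd y z)) = foldr vadd xs (vadd u (vadd w z))"
  by simp

theorem lemma3p1:
  fixes n d :: nat and a lam :: "nat list" and ps :: "nat list list"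
  assumes "n \<ge> 2" and "d \<ge> 2"
    and "a \<in> Vnd n d" and "sorted a"
    and "a \<noteq> replicate (n - 1) 0 @ [d]"
    and "a \<noteq> replicate (n - 2) 0 @ [1, d - 1]"
    and "a \<noteq> replicate (n - 2) 0 @ [2, d - 2]"
    and G: "{vadd x y | x y. x \<in> Vnd n d - {a} \<and> y \<in> Vnd n d - {a}} = Vnd n (2 * d)"
    and "\<exists>gs. gs \<noteq> [] \<and> set gs \<subseteq> Vnd n d - {a} \<and> vsum n gs = lam"
    and P: "is_chain n d lam ps" and "adeg a ps \<ge> 1"
  shows "cdim (F_lt_cap n d a lam ps) = cdim (Delta n d lam) - 1
    \<and> cdim (F_lt_cap n d a lam ps) = int (sum_list lam div d) - 3"
proof -
  define k where "k = length ps"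
  have d0: "d > 0" using assms(2) by simp
  have kdiv: "sum_list lam div d = k" using chain_len[OF P d0] k_def by simp
  have LP: "\<forall>l\<in>set ps. length l = n" using chain_L[OF P] .
  have aps: "a \<in> set ps" using \<open>adeg a ps \<ge> 1\<close> count_list_0_iff[of ps a] by (auto simp: adeg_def)
  obtain gs where gs: "gs \<noteq> []" "set gs \<subseteq> Vnd n d - {a}" "vsum n gs = lam" using assms(9) by blast
  have Pgs: "is_chain n d lam gs" using gs by (auto simp: is_chain_def)
  have lgs: "length gs = k" using chain_len[OF Pgs d0] kdiv by simp
  have k2: "k \<ge> 2"
  proof (rule ccontr)
    assume "\<not> k \<ge> 2"
    moreover have "k \<noteq> 0" using aps k_def by auto
    ultimately have "k = 1" by simp
    then obtain l where "ps = [l]" using k_def by (cases ps) auto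
    then have "l = a" using aps by simp
    then have la: "lam = a" using P \<open>ps = [l]\<close> assms(3) vadd_zero[of a n] by (simp add: is_chain_def Vnd_def)
    obtain g where "gs = [g]" using lgs \<open>k = 1\<close> by (cases gs) auto
    then have "lam = g" "g \<noteq> a" "g \<in> Vnd n d" using gs by (auto simp: vadd_zero Vnd_def)
    then show False using la by simp
  qed
  have cardP: "card (open_chain ps) = k - 1" using card_oc[OF P d0] k_def by simp
  have lenm: "length ms = k" if "is_chain n d lam ms" for ms using chain_len[OF that d0] kdiv by simp
  have D: "cdim (Delta n d lam) = int k - 2"
    unfolding cdim_def
  proof (rule Max_eqI)
    have "(\<lambda>\<sigma>. int (card \<sigma>) - 1) ` Delta n d lam \<subseteq> {-1..int k - 2}"
    proof
      fix x assume "x \<in> (\<lambda>\<sigma>. int (card \<sigma>) - 1) ` Delta n d lam"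
      then obtain \<sigma> ms where "x = int (card \<sigma>) - 1" "is_chain n d lam ms" "\<sigma> \<subseteq> open_chain ms"
        by (auto simp: Delta_def)
      moreover have "card \<sigma> \<le> card (open_chain ms)"
        using calculation by (intro card_mono) (auto simp: open_chain_def)
      moreover have "card (open_chain ms) \<le> k - 1" using card_oc_le[of ms] lenm calculation by simp
      ultimately show "x \<in> {-1..int k - 2}" using k2 by auto
    qed
    then show "finite ((\<lambda>\<sigma>. int (card \<sigma>) - 1) ` Delta n d lam)"
      using finite_subset by blast
    show "y \<le> int k - 2" if "y \<in> (\<lambda>\<sigma>. int (card \<sigma>) - 1) ` Delta n d lam" for y
      using \<open>_ \<subseteq> {-1..int k - 2}\<close> that by auto
    have "open_chain ps \<in> Delta n d lam" using P by (auto simp: Delta_def)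
    then show "int k - 2 \<in> (\<lambda>\<sigma>. int (card \<sigma>) - 1) ` Delta n d lam"
      using cardP k2 by (intro image_eqI[of _ _ "open_chain ps"]) auto
  qed
  have upper: "card \<sigma> \<le> k - 2" if sF0: "\<sigma> \<in> F_lt_cap n d a lam ps" for \<sigma>
  proof -
    obtain qs where s: "\<sigma> \<subseteq> open_chain ps" "is_chain n d lam qs" "facet_less a qs ps" "\<sigma> \<subseteq> open_chain qs"
      using sF0 by (auto simp: F_lt_cap_def)
    have fin: "finite (open_chain ps)" "finite (open_chain qs)" by (auto simp: open_chain_def)
    have c1: "card \<sigma> \<le> k - 1" using card_mono[OF fin(1) s(1)] cardP by simp
    have cq: "card (open_chain qs) \<le> k - 1" using card_oc_le[of qs] lenm[OF s(2)] by simp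
    show ?thesis
    proof (rule ccontr)
      assume "\<not> card \<sigma> \<le> k - 2"
      then have cs: "card \<sigma> = k - 1" using c1 k2 by simp
      have "\<sigma> = open_chain ps" using card_seteq[OF fin(1) s(1)] cs cardP by simp
      moreover have "\<sigma> = open_chain qs" using card_seteq[OF fin(2) s(4)] cs cq by simp
      ultimately have "qs = ps" using chain_inj[OF s(2) P d0] by simp
      moreover have "\<not> facet_less a ps ps"
        unfolding facet_less_def using lexord_irreflexive[of "{(b, c). vlex b c}" ps]
        by (auto simp: vlex_def lexord_irreflexive)
      ultimately show False using s(3) by simp
    qed
  qed
  obtain xs u w ys where dec: "ps = xs @ u # w # ys" and uw: "u = a \<or> w = a"
  proof -
    obtain i where i: "i < k" "ps ! i = a" using aps k_def by (auto simp: in_set_conv_nth)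
    obtain m where m: "Suc m < k" "ps ! m = a \<or> ps ! Suc m = a"
    proof (cases "Suc i < k")
      case True then show ?thesis using that i by blast
    next
      case False then have "i = Suc (i - 1)" using i k2 by simp
      then show ?thesis using that[of "i - 1"] i by (metis)
    qed
    have "ps = take m ps @ ps ! m # drop (Suc m) ps" using m k_def by (simp add: id_take_nth_drop)
    also have "drop (Suc m) ps = ps ! Suc m # drop (Suc (Suc m)) ps"
      using m k_def by (simp add: Cons_nth_drop_Suc)
    finally show ?thesis using that m by blast
  qed
  have uwV: "u \<in> Vnd n d" "w \<in> Vnd n d" using P dec by (auto simp: is_chain_def)
  have "vadd u w \<in> Vnd n (2 * d)" using uwV by (auto simp: Vnd_def sum_vadd)
  then have "vadd u w \<in> {vadd x y | x y. x \<in> Vnd n d - {a} \<and> y \<in> Vnd n d - {a}}"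
    by (simp only: G)
  then obtain x y where xy: "x \<in> Vnd n d - {a}" "y \<in> Vnd n d - {a}" "vadd x y = vadd u w"
    by (smt (verit) mem_Collect_eq)
  define qs where "qs = xs @ x # y # ys"
  have sw: "vadd x (vadd y z) = vadd u (vadd w z)" for z
    using xy(3) by (metis vadd_assoc)
  have Q: "is_chain n d lam qs"
    using P xy dec sw unfolding qs_def is_chain_def by (auto simp: vsum_append)
  have lq: "length qs = k" using dec k_def qs_def by simp
  have fl: "facet_less a qs ps"
    using xy uw unfolding facet_less_def adeg_def qs_def dec by auto
  define v where "v = vsum n (take (Suc (length xs)) ps)"
  define \<sigma> where "\<sigma> = open_chain ps - {v}"
  have vin: "v \<in> open_chain ps" unfolding v_def open_chain_eq[OF LP] using dec by (intro imageI) auto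
  have LQ: "\<forall>l\<in>set qs. length l = n" using chain_L[OF Q] .
  have sub: "\<sigma> \<subseteq> open_chain qs"
  proof
    fix z assume "z \<in> \<sigma>"
    then obtain j where j: "j \<in> {1..<k}" "z = vsum n (take j ps)" "j \<noteq> Suc (length xs)"
      unfolding \<sigma>_def v_def open_chain_eq[OF LP] k_def by auto metis
    have "vsum n (take j ps) = vsum n (take j qs)"
    proof (cases "j \<le> length xs")
      case True then show ?thesis unfolding dec qs_def by simp
    next
      case False
      then have "j \<ge> length xs + 2" using j by simp
      then obtain r where r: "j = length xs + 2 + r" using le_Suc_ex by blast
      show ?thesis unfolding dec qs_def r using sw by (simp add: vsum_append)
    qed
    then show "z \<in> open_chain qs" unfolding open_chain_eq[OF LQ] lq using j by auto
  qed
  have cs: "card \<sigma> = k - 2" unfolding \<sigma>_def using vin cardP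
    by (simp add: card_Diff_singleton)
  have sF: "\<sigma> \<in> F_lt_cap n d a lam ps"
    unfolding F_lt_cap_def using sub Q fl by (auto simp: \<sigma>_def)
  have F: "cdim (F_lt_cap n d a lam ps) = int k - 3"
    unfolding cdim_def
  proof (rule Max_eqI)
    have "(\<lambda>\<sigma>. int (card \<sigma>) - 1) ` F_lt_cap n d a lam ps \<subseteq> {-1..int k - 3}"
      using upper k2 by fastforce
    then show "finite ((\<lambda>\<sigma>. int (card \<sigma>) - 1) ` F_lt_cap n d a lam ps)"
      using finite_subset by blast
    show "y \<le> int k - 3" if "y \<in> (\<lambda>\<sigma>. int (card \<sigma>) - 1) ` F_lt_cap n d a lam ps" for y
      using \<open>_ \<subseteq> {-1..int k - 3}\<close> that by auto
    show "int k - 3 \<in> (\<lambda>\<sigma>. int (card \<sigma>) - 1) ` F_lt_cap n d a lam ps"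
      using sF cs k2 by (intro image_eqI[of _ _ \<sigma>]) auto
  qed
  show ?thesis using D F kdiv by simp
qed

end
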